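(* Let $H=(V,E)$ be a hypergraph with $V$ finite, let $C=(C_R)_{R\subseteq V}$ be non-negative capacities supported on $H$ (i.e. $C_R=0$ whenever $R\notin E$), and let $D=(D_S)_{S\subseteq V}$ be non-negative demands. Then \[ \mathrm{MaxHSP}(V,C,D)\ \le\ \mathrm{MinHypCut}(V,C,D)\ \le\ k_1(H)\,\mathrm{MaxHSP}(V,C,D). \]
   Context: A diversity on a set $X$ is a function $\delta$ from finite subsets of $X$ to $\mathbb{R}$ with $\delta(A)\ge 0$, $\delta(A)=0$ whenever $|A|\le 1$ (values $0$ on larger sets are allowed), and $\delta(A\cup B)+\delta(B\cup C)\ge\delta(A\cup C)$ for all finite $A,B,C$ with $B\neq\emptyset$. For vectors indexed by subsets of $V$ write $C\cdot\delta=\sum_{R\subseteq V}C_R\delta(R)$. All subsets $R\subseteq V$ are regarded as hyperedges (with capacity $C_R$, possibly $0$). For $S\subseteq V$, $\mathcal{T}_S$ is the set of minimal connected sub-hypergraphs (sets $t$ of hyperedges, connected, whose union contains $S$, minimal with this property). $\mathrm{MaxHSP}(V,C,D)$ is the optimal value of the LP: maximize $f$ subject to $\sum_{S}\sum_{t\in\mathcal{T}_S:R\in t}z_{t,S}\le C_R$ for all $R\subseteq V$, $\sum_{t\in\mathcal{T}_S}z_{t,S}=f\cdot D_S$ for all $S\subseteq V$, and $z_{t,S}\ge0$. For $U\subseteq V$ let $\partial U$ be the set of subsets of $V$ meeting both $U$ and $V\setminus U$. $\mathrm{MinHypCut}(V,C,D)=\min_{U\subseteq V}\frac{\sum_{A\in\partial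 U}C_A}{\sum_{S\in\partial U}D_S}$ (over $U$ with nonzero denominator). Given non-negative weights $w$ on $E$, the hypergraph Steiner diversity is $\delta(A)=\min\{\sum_{e\in E'}w(e): E'\subseteq E,\ E' \text{ induces a connected sub-hypergraph containing } A\}$. A diversity on $V$ is supported on $H$ if it is the hypergraph Steiner diversity of $H$ for some non-negative weights on $E$. The $\ell_1^m$ diversity is $(\mathbb{R}^m,\delta_1)$ with $\delta_1(A)=\sum_{i=1}^m\max\{|a_i-b_i|:a,b\in A\}$; a diversity $\delta$ on $V$ is $\ell_1$-embeddable if there are $m$ and $\phi:V\to\mathbb{R}^m$ with $\delta(A)=\delta_1(\phi(A))$ for all $A$. Two diversities $\delta,\delta'$ on $V$ are at distortion $c$ if there are $c_1,c_2>0$ with $c=c_1c_2$ and $\frac1{c_1}\delta(A)\le\delta'(A)\le c_2\delta(A)$ for all $A\subseteq V$. $k_1(\delta)$ is the minimal distortion between $\delta$ and an $\ell_1$-embeddable diversity on $V$, and $k_1(H)$ is the maximum of $k_1(\delta)$ over all diversities $\delta$ supported on $H$. *)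

theory Defs
  imports Complex_Main
begin

definition hlink :: "'a set set \<Rightarrow> ('a \<times> 'a) set" where
  "hlink t = {(x, y). \<exists>e\<in>t. x \<in> e \<and> y \<in> e}"

text \<open>The set t of hyperedges induces a connected sub-hypergraph containing S:
  the hypergraph with vertex set S together with the union of t, and edge set t, is connected.
  (For card S at most 1 the empty set of hyperedges qualifies, matching the convention
  delta(A) = 0 for card A at most 1 of the Steiner diversity.)\<close>
definition conn_contains :: "'a set \<Rightarrow> 'a set set \<Rightarrow> bool" where
  "conn_contains S t \<longleftrightarrow>
     (\<forall>x \<in> S \<union> \<Union>t. \<forall>y \<in> S \<union> \<Union>t. (x, y) \<in> (hlink t)\<^sup>*)"

definition Trees :: "'a set \<Rightarrow> 'a set \<Rightarrow> 'a set set set" where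
  "Trees V S = {t. t \<subseteq> Pow V \<and> conn_contains S t \<and>
                   (\<forall>t'. t' \<subset> t \<longrightarrow> \<not> conn_contains S t')}"

definition hsp_feasible ::
  "'a set \<Rightarrow> ('a set \<Rightarrow> real) \<Rightarrow> ('a set \<Rightarrow> real) \<Rightarrow> real \<Rightarrow> bool" where
  "hsp_feasible V C D f \<longleftrightarrow>
     (\<exists>z :: 'a set \<Rightarrow> 'a set set \<Rightarrow> real.
        (\<forall>S \<in> Pow V. \<forall>t \<in> Trees V S. 0 \<le> z S t) \<and>
        (\<forall>R \<in> Pow V. (\<Sum>S \<in> Pow V. \<Sum>t \<in> {t \<in> Trees V S. R \<in> t}. z S t) \<le> C R) \<and>
        (\<forall>S \<in> Pow V. (\<Sum>t \<in> Trees V S. z S t) = f * D S))"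

definition MaxHSP :: "'a set \<Rightarrow> ('a set \<Rightarrow> real) \<Rightarrow> ('a set \<Rightarrow> real) \<Rightarrow> real" where
  "MaxHSP V C D = Sup {f. hsp_feasible V C D f}"

definition boundary :: "'a set \<Rightarrow> 'a set \<Rightarrow> 'a set set" where
  "boundary V U = {A. A \<subseteq> V \<and> A \<inter> U \<noteq> {} \<and> A \<inter> (V - U) \<noteq> {}}"

definition MinHypCut :: "'a set \<Rightarrow> ('a set \<Rightarrow> real) \<Rightarrow> ('a set \<Rightarrow> real) \<Rightarrow> real" where
  "MinHypCut V C D =
     Min {(\<Sum>A \<in> boundary V U. C A) / (\<Sum>S \<in> boundary V U. D S) | U.
            U \<subseteq> V \<and> (\<Sum>S \<in> boundary V U. D S) \<noteq> 0}"

definition is_diversity :: "'a set \<Rightarrow> ('a set \<Rightarrow> real) \<Rightarrow> bool" where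
  "is_diversity X \<delta> \<longleftrightarrow>
     (\<forall>A. finite A \<and> A \<subseteq> X \<longrightarrow> 0 \<le> \<delta> A) \<and>
     (\<forall>A. finite A \<and> A \<subseteq> X \<and> card A \<le> 1 \<longrightarrow> \<delta> A = 0) \<and>
     (\<forall>A B C. finite A \<and> A \<subseteq> X \<and> finite B \<and> B \<subseteq> X \<and> finite C \<and> C \<subseteq> X \<and> B \<noteq> {}
        \<longrightarrow> \<delta> (A \<union> C) \<le> \<delta> (A \<union> B) + \<delta> (B \<union> C))"

definition steiner :: "'a set set \<Rightarrow> ('a set \<Rightarrow> real) \<Rightarrow> 'a set \<Rightarrow> real" where
  "steiner E w A = Min {(\<Sum>e \<in> E'. w e) | E'. E' \<subseteq> E \<and> conn_contains A E'}"

definition supported_on :: "'a set \<Rightarrow> 'a set set \<Rightarrow> ('a set \<Rightarrow> real) \<Rightarrow> bool" where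
  "supported_on V E \<delta> \<longleftrightarrow> is_diversity V \<delta> \<and>
     (\<exists>w. (\<forall>e \<in> E. 0 \<le> w e) \<and> (\<forall>A. A \<subseteq> V \<longrightarrow> \<delta> A = steiner E w A))"

text \<open>The l1^m diversity; points of R^m are represented as nat => real, coordinates i < m.\<close>
definition l1_div :: "nat \<Rightarrow> (nat \<Rightarrow> real) set \<Rightarrow> real" where
  "l1_div m P = (\<Sum>i<m. Max (insert 0 {\<bar>p i - q i\<bar> | p q. p \<in> P \<and> q \<in> P}))"

definition l1_embeddable :: "'a set \<Rightarrow> ('a set \<Rightarrow> real) \<Rightarrow> bool" where
  "l1_embeddable V \<delta> \<longleftrightarrow>
     (\<exists>m. \<exists>\<phi> :: 'a \<Rightarrow> nat \<Rightarrow> real. \<forall>A. A \<subseteq> V \<longrightarrow> \<delta> A = l1_div m (\<phi> ` A))"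

definition at_distortion :: "'a set \<Rightarrow> ('a set \<Rightarrow> real) \<Rightarrow> ('a set \<Rightarrow> real) \<Rightarrow> real \<Rightarrow> bool" where
  "at_distortion V \<delta> \<delta>' c \<longleftrightarrow>
     (\<exists>c1 c2. 0 < c1 \<and> 0 < c2 \<and> c = c1 * c2 \<and>
        (\<forall>A. A \<subseteq> V \<longrightarrow> \<delta> A / c1 \<le> \<delta>' A \<and> \<delta>' A \<le> c2 * \<delta> A))"

definition k1_div :: "'a set \<Rightarrow> ('a set \<Rightarrow> real) \<Rightarrow> real" where
  "k1_div V \<delta> = Inf {c. \<exists>\<delta>'. l1_embeddable V \<delta>' \<and> at_distortion V \<delta> \<delta>' c}"

definition k1_hyp :: "'a set \<Rightarrow> 'a set set \<Rightarrow> real" where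
  "k1_hyp V E = Sup {k1_div V \<delta> | \<delta>. supported_on V E \<delta>}"

end

theory Submission
  imports Defs
begin


definition ip :: "'i set \<Rightarrow> ('i \<Rightarrow> real) \<Rightarrow> ('i \<Rightarrow> real) \<Rightarrow> real" where
  "ip I y v = (\<Sum>i\<in>I. y i * v i)"

lemma farkas_aux:
  assumes "finite J" and fI: "finite I"
  shows "(\<forall>y. (\<forall>j\<in>J. 0 \<le> ip I y (a j)) \<longrightarrow> 0 \<le> ip I y b) \<Longrightarrow>
     \<exists>l. (\<forall>j\<in>J. 0 \<le> l j) \<and> (\<forall>i\<in>I. b i = (\<Sum>j\<in>J. l j * a j i))"
  using assms(1)
proof (induction J arbitrary: a b rule: finite_induct)
  case empty
  then have "0 \<le> ip I (\<lambda>i. - b i) b" by simp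
  then have "(\<Sum>i\<in>I. b i * b i) \<le> 0" by (simp add: ip_def sum_negf)
  moreover have "\<forall>i\<in>I. 0 \<le> b i * b i" by simp
  ultimately have "\<forall>i\<in>I. b i * b i = 0"
    using sum_nonneg_eq_0_iff[OF fI, of "\<lambda>i. b i * b i"] by (simp add: antisym sum_nonneg)
  then show ?case by simp
next
  case (insert m J)
  show ?case
  proof (cases "\<forall>y. (\<forall>j\<in>J. 0 \<le> ip I y (a j)) \<longrightarrow> 0 \<le> ip I y b")
    case True
    from insert.IH[OF True] obtain l where l: "\<forall>j\<in>J. 0 \<le> l j" "\<forall>i\<in>I. b i = (\<Sum>j\<in>J. l j * a j i)"
      by blast
    show ?thesis
      apply (rule exI[of _ "l(m := 0)"])
      using l insert.hyps by (auto intro!: sum.cong)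
  next
    case False
    then obtain w where w: "\<forall>j\<in>J. 0 \<le> ip I w (a j)" "ip I w b < 0" by force
    have am: "ip I w (a m) < 0"
      using insert.prems w by (metis insert_iff not_le)
    define al where "al = ip I w (a m)"
    define a' where "a' = (\<lambda>j i. a j i - (ip I w (a j) / al) * a m i)"
    define b' where "b' = (\<lambda>i. b i - (ip I w b / al) * a m i)"
    have ipl: "ip I y (\<lambda>i. u i - c * v i) = ip I y u - c * ip I y v" for y u v c
      by (simp add: ip_def algebra_simps sum_subtractf sum_distrib_left)
    have ipr: "ip I (\<lambda>i. y i - c * v i) u = ip I y u - c * ip I v u" for y u v c
      by (simp add: ip_def algebra_simps sum_subtractf sum_distrib_left)
    have H: "\<forall>y. (\<forall>j\<in>J. 0 \<le> ip I y (a' j)) \<longrightarrow> 0 \<le> ip I y b'"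
    proof (intro allI impI)
      fix y assume y: "\<forall>j\<in>J. 0 \<le> ip I y (a' j)"
      define y' where "y' = (\<lambda>i. y i - (ip I y (a m) / al) * w i)"
      have e: "ip I y' u = ip I y u - (ip I y (a m) / al) * ip I w u" for u
        unfolding y'_def by (rule ipr)
      have "\<forall>j\<in>insert m J. 0 \<le> ip I y' (a j)"
      proof
        fix j assume "j \<in> insert m J"
        then show "0 \<le> ip I y' (a j)"
        proof
          assume "j = m" then show ?thesis using am by (simp add: e al_def)
        next
          assume j: "j \<in> J"
          have "ip I y (a' j) = ip I y' (a j)"
            unfolding a'_def ipl e by (simp add: algebra_simps)
          then show ?thesis using y j by metis
        qed
      qed
      then have "0 \<le> ip I y' b" using insert.prems by blast
      moreover have "ip I y b' = ip I y' b"
        unfolding b'_def ipl e by (simp add: algebra_simps)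
      ultimately show "0 \<le> ip I y b'" by simp
    qed
    from insert.IH[OF H] obtain l where l: "\<forall>j\<in>J. 0 \<le> l j"
      "\<forall>i\<in>I. b' i = (\<Sum>j\<in>J. l j * a' j i)" by blast
    define mu where "mu = (ip I w b - (\<Sum>j\<in>J. l j * ip I w (a j))) / al"
    have "(\<Sum>j\<in>J. l j * ip I w (a j)) \<ge> 0" using l w by (simp add: sum_nonneg)
    then have mu: "0 \<le> mu" unfolding mu_def using w am al_def
      by (simp add: divide_nonpos_neg)
    show ?thesis
    proof (rule exI[of _ "l(m := mu)"], intro conjI ballI)
      fix j assume "j \<in> insert m J" then show "0 \<le> (l(m := mu)) j" using l mu by auto
    next
      fix i assume i: "i \<in> I"
      have s: "(\<Sum>j\<in>J. (l(m := mu)) j * a j i) = (\<Sum>j\<in>J. l j * a j i)"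
        using insert.hyps by (intro sum.cong) auto
      have "b i = b' i + (ip I w b / al) * a m i" by (simp add: b'_def)
      also have "b' i = (\<Sum>j\<in>J. l j * a j i) - (\<Sum>j\<in>J. l j * ip I w (a j)) / al * a m i"
        using l(2) i unfolding a'_def
        by (simp add: algebra_simps sum_subtractf sum_distrib_left sum_divide_distrib sum_distrib_right)
      finally have "b i = (\<Sum>j\<in>J. l j * a j i) + mu * a m i"
        unfolding mu_def by (simp add: algebra_simps diff_divide_distrib)
      then show "b i = (\<Sum>j\<in>insert m J. (l(m := mu)) j * a j i)"
        using insert.hyps s by simp
    qed
  qed
qed


lemma hlink_mono: "t \<subseteq> t' \<Longrightarrow> (hlink t)\<^sup>* \<subseteq> (hlink t')\<^sup>*"
  unfolding hlink_def by (rule rtrancl_mono) blast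

lemma conn_union:
  assumes "conn_contains (A \<union> B) E1" "conn_contains (B \<union> C) E2" "b \<in> B"
  shows "conn_contains (A \<union> C) (E1 \<union> E2)"
  unfolding conn_contains_def
proof (intro ballI)
  fix x y assume x: "x \<in> A \<union> C \<union> \<Union>(E1 \<union> E2)" and y: "y \<in> A \<union> C \<union> \<Union>(E1 \<union> E2)"
  have m1: "(hlink E1)\<^sup>* \<subseteq> (hlink (E1 \<union> E2))\<^sup>*" by (rule hlink_mono) blast
  have m2: "(hlink E2)\<^sup>* \<subseteq> (hlink (E1 \<union> E2))\<^sup>*" by (rule hlink_mono) blast
  have tob: "(z, b) \<in> (hlink (E1 \<union> E2))\<^sup>* \<and> (b, z) \<in> (hlink (E1 \<union> E2))\<^sup>*"
    if "z \<in> A \<union> C \<union> \<Union>(E1 \<union> E2)" for z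
  proof -
    have "z \<in> A \<union> B \<union> \<Union>E1 \<or> z \<in> B \<union> C \<union> \<Union>E2" using that by blast
    then show ?thesis
    proof
      assume "z \<in> A \<union> B \<union> \<Union>E1"
      then show ?thesis using assms(1) assms(3) m1 unfolding conn_contains_def by blast
    next
      assume "z \<in> B \<union> C \<union> \<Union>E2"
      then show ?thesis using assms(2) assms(3) m2 unfolding conn_contains_def by blast
    qed
  qed
  show "(x, y) \<in> (hlink (E1 \<union> E2))\<^sup>*"
    using tob[OF x] tob[OF y] by (meson rtrancl_trans)
qed

lemma conn_small: "finite A \<Longrightarrow> card A \<le> 1 \<Longrightarrow> conn_contains A {}"
  unfolding conn_contains_def
  by (auto simp: card_le_Suc0_iff_eq)

lemma conn_sub: "conn_contains V E \<Longrightarrow> A \<subseteq> V \<Longrightarrow> conn_contains A E"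
  unfolding conn_contains_def by blast

lemma conn_single: "conn_contains R {R}"
  unfolding conn_contains_def hlink_def by auto

lemma exists_tree:
  assumes "finite E'" "E' \<subseteq> Pow V" "conn_contains S E'"
  shows "\<exists>t\<in>Trees V S. t \<subseteq> E'"
proof -
  define F where "F = {t. t \<subseteq> E' \<and> conn_contains S t}"
  have "F \<subseteq> Pow E'" unfolding F_def by blast
  then have fin: "finite F" using assms(1) by (simp add: finite_subset)
  have EF: "E' \<in> F" unfolding F_def using assms(3) by simp
  then have ne: "F \<noteq> {}" by (metis empty_iff)
  obtain t where tF: "t \<in> F" and tmin: "\<And>b. b \<in> F \<Longrightarrow> b \<le> t \<Longrightarrow> t = b"
    using finite_has_minimal[OF fin ne] by metis
  have tE: "t \<subseteq> E'" and tc: "conn_contains S t" using tF unfolding F_def by auto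
  have "t \<in> Trees V S"
    unfolding Trees_def
  proof (intro CollectI conjI allI impI)
    show "t \<subseteq> Pow V" using tE assms(2) by (rule subset_trans)
    show "conn_contains S t" by (rule tc)
    fix t' assume tt: "t' \<subset> t"
    show "\<not> conn_contains S t'"
    proof
      assume "conn_contains S t'"
      then have "t' \<in> F" unfolding F_def using tt tE by blast
      then have "t = t'" using tmin[of t'] tt by blast
      then show False using tt by simp
    qed
  qed
  then show ?thesis using tE by blast
qed

lemma steiner_props:
  fixes E :: "'a set set"
  assumes "finite E" "conn_contains A E"
  shows "\<exists>E'\<subseteq>E. conn_contains A E' \<and> steiner E w A = (\<Sum>e\<in>E'. w e)"
    and "\<And>E'. E' \<subseteq> E \<Longrightarrow> conn_contains A E' \<Longrightarrow> steiner E w A \<le> (\<Sum>e\<in>E'. w e)"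
proof -
  let ?S = "{(\<Sum>e \<in> E'. w e) | E'. E' \<subseteq> E \<and> conn_contains A E'}"
  have fin: "finite ?S" using assms(1) by simp
  have ne: "?S \<noteq> {}" using assms(2) by blast
  show "\<exists>E'\<subseteq>E. conn_contains A E' \<and> steiner E w A = (\<Sum>e\<in>E'. w e)"
    using Min_in[OF fin ne] unfolding steiner_def by auto
  fix E' assume "E' \<subseteq> E" "conn_contains A E'"
  then show "steiner E w A \<le> (\<Sum>e\<in>E'. w e)"
    unfolding steiner_def by (intro Min_le[OF fin]) blast
qed

lemma steiner_diversity:
  assumes fV: "finite V" and EV: "E \<subseteq> Pow V" and cV: "conn_contains V E"
    and w: "\<forall>e\<in>E. 0 \<le> w e"
  shows "is_diversity V (steiner E w)"
proof -
  have fE: "finite E" using finite_subset[OF EV] fV by simp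
  have nn: "0 \<le> steiner E w A" if AV: "A \<subseteq> V" for A
  proof -
    obtain E' where "E' \<subseteq> E" "steiner E w A = (\<Sum>e\<in>E'. w e)"
      using steiner_props(1)[OF fE conn_sub[OF cV AV]] by blast
    moreover have "0 \<le> (\<Sum>e\<in>E'. w e)" using w \<open>E' \<subseteq> E\<close> by (intro sum_nonneg) blast
    ultimately show ?thesis by simp
  qed
  show ?thesis
    unfolding is_diversity_def
  proof (intro conjI allI impI)
    fix A assume "finite A \<and> A \<subseteq> V" then show "0 \<le> steiner E w A" using nn by blast
  next
    fix A assume A: "finite A \<and> A \<subseteq> V \<and> card A \<le> 1"
    have "steiner E w A \<le> (\<Sum>e\<in>{}. w e)"
    proof (rule steiner_props(2)[OF fE])
      show "conn_contains A E" using conn_sub[OF cV] A by blast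
      show "conn_contains A {}" using A conn_small by blast
    qed simp
    then show "steiner E w A = 0" using nn[of A] A by simp
  next
    fix A B C assume H: "finite A \<and> A \<subseteq> V \<and> finite B \<and> B \<subseteq> V \<and> finite C \<and> C \<subseteq> V \<and> B \<noteq> {}"
    then obtain b where b: "b \<in> B" by blast
    have ABV: "A \<union> B \<subseteq> V" "B \<union> C \<subseteq> V" "A \<union> C \<subseteq> V" using H by auto
    obtain E1 where E1: "E1 \<subseteq> E" "conn_contains (A \<union> B) E1" "steiner E w (A \<union> B) = (\<Sum>e\<in>E1. w e)"
      using steiner_props(1)[OF fE conn_sub[OF cV ABV(1)]] by blast
    obtain E2 where E2: "E2 \<subseteq> E" "conn_contains (B \<union> C) E2" "steiner E w (B \<union> C) = (\<Sum>e\<in>E2. w e)"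
      using steiner_props(1)[OF fE conn_sub[OF cV ABV(2)]] by blast
    have "steiner E w (A \<union> C) \<le> (\<Sum>e\<in>E1 \<union> E2. w e)"
      using steiner_props(2)[OF fE conn_sub[OF cV ABV(3)], of "E1 \<union> E2"] E1(1) E2(1) conn_union[OF E1(2) E2(2) b]
      by blast
    also have "\<dots> \<le> (\<Sum>e\<in>E1. w e) + (\<Sum>e\<in>E2. w e)"
    proof -
      have f1: "finite E1" "finite E2" using finite_subset[OF E1(1) fE] finite_subset[OF E2(1) fE] by auto
      have "(\<Sum>e\<in>E1 \<union> E2. w e) + (\<Sum>e\<in>E1 \<inter> E2. w e) = (\<Sum>e\<in>E1. w e) + (\<Sum>e\<in>E2. w e)"
        using sum.union_inter[OF f1] .
      moreover have "0 \<le> (\<Sum>e\<in>E1 \<inter> E2. w e)" using w E1 by (intro sum_nonneg) auto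
      ultimately show ?thesis by linarith
    qed
    finally show "steiner E w (A \<union> C) \<le> steiner E w (A \<union> B) + steiner E w (B \<union> C)"
      using E1 E2 by simp
  qed
qed


lemma trees_fin: "finite V \<Longrightarrow> finite (Trees V S)"
  by (rule finite_subset[of _ "Pow (Pow V)"]) (auto simp: Trees_def)

lemma trees_sub: "t \<in> Trees V S \<Longrightarrow> t \<subseteq> Pow V"
  by (simp add: Trees_def)

lemma crossing_path:
  assumes "(x, y) \<in> (hlink t)\<^sup>*" "x \<in> U" "y \<notin> U"
  shows "\<exists>e\<in>t. e \<inter> U \<noteq> {} \<and> y' \<in> e \<and> False \<or> (\<exists>e\<in>t. (\<exists>p\<in>e. p \<in> U) \<and> (\<exists>q\<in>e. q \<notin> U))"
  using assms
proof (induction rule: rtrancl_induct)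
  case base then show ?case by simp
next
  case (step y z)
  show ?case
  proof (cases "y \<in> U")
    case True
    from step.hyps(2) obtain e where "e \<in> t" "y \<in> e" "z \<in> e" unfolding hlink_def by blast
    then show ?thesis using True step.prems by blast
  next
    case False
    then show ?thesis using step.IH step.prems by blast
  qed
qed

lemma tree_crosses:
  assumes t: "t \<in> Trees V S" and S: "S \<in> boundary V U"
  shows "\<exists>R\<in>t. R \<in> boundary V U"
proof -
  from S obtain x y where xy: "x \<in> S" "x \<in> U" "y \<in> S" "y \<in> V" "y \<notin> U" "S \<subseteq> V"
    unfolding boundary_def by blast
  have "conn_contains S t" using t by (simp add: Trees_def)
  then have "(x, y) \<in> (hlink t)\<^sup>*" unfolding conn_contains_def using xy by blast
  then obtain e where e: "e \<in> t" "\<exists>p\<in>e. p \<in> U" "\<exists>q\<in>e. q \<notin> U"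
    using crossing_path[of x y t U] xy by blast
  have "e \<subseteq> V" using e(1) trees_sub[OF t] by blast
  then have "e \<in> boundary V U" unfolding boundary_def using e by blast
  then show ?thesis using e(1) by blast
qed

lemma flow_le_cut:
  assumes fV: "finite V" and feas: "hsp_feasible V C D f"
  shows "f * (\<Sum>S\<in>boundary V U. D S) \<le> (\<Sum>A\<in>boundary V U. C A)"
proof -
  obtain z where z0: "\<forall>S \<in> Pow V. \<forall>t \<in> Trees V S. 0 \<le> z S t"
    and zc: "\<forall>R \<in> Pow V. (\<Sum>S \<in> Pow V. \<Sum>t \<in> {t \<in> Trees V S. R \<in> t}. z S t) \<le> C R"
    and zd: "\<forall>S \<in> Pow V. (\<Sum>t \<in> Trees V S. z S t) = f * D S"
    using feas unfolding hsp_feasible_def by blast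
  define B where "B = boundary V U"
  have BP: "B \<subseteq> Pow V" unfolding B_def boundary_def by blast
  have fB: "finite B" using BP fV finite_subset by blast
  have fT: "\<And>S. finite (Trees V S)" using trees_fin[OF fV] .
  have "f * (\<Sum>S\<in>B. D S) = (\<Sum>S\<in>B. \<Sum>t \<in> Trees V S. z S t)"
    using zd BP by (simp add: sum_distrib_left subset_eq)
  also have "\<dots> \<le> (\<Sum>S\<in>B. \<Sum>t \<in> Trees V S. \<Sum>R\<in>B. if R \<in> t then z S t else 0)"
  proof (rule sum_mono, rule sum_mono)
    fix S t assume S: "S \<in> B" and t: "t \<in> Trees V S"
    obtain R where R: "R \<in> t" "R \<in> B" using tree_crosses[OF t] S unfolding B_def by blast
    have nn: "0 \<le> z S t" using z0 S t BP by blast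
    have "z S t = (if R \<in> t then z S t else 0)" using R by simp
    also have "\<dots> \<le> (\<Sum>R\<in>B. if R \<in> t then z S t else 0)"
      by (rule member_le_sum[OF R(2)]) (use nn fB in auto)
    finally show "z S t \<le> (\<Sum>R\<in>B. if R \<in> t then z S t else 0)" .
  qed
  also have "\<dots> = (\<Sum>S\<in>B. \<Sum>R\<in>B. \<Sum>t \<in> Trees V S. if R \<in> t then z S t else 0)"
    by (intro sum.cong refl) (rule sum.swap)
  also have "\<dots> = (\<Sum>R\<in>B. \<Sum>S\<in>B. \<Sum>t \<in> Trees V S. if R \<in> t then z S t else 0)"
    by (rule sum.swap)
  also have "\<dots> = (\<Sum>R\<in>B. \<Sum>S\<in>B. \<Sum>t \<in> {t \<in> Trees V S. R \<in> t}. z S t)"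
    by (simp only: sum.inter_filter[OF fT])
  also have "\<dots> \<le> (\<Sum>R\<in>B. \<Sum>S\<in>Pow V. \<Sum>t \<in> {t \<in> Trees V S. R \<in> t}. z S t)"
  proof (rule sum_mono, rule sum_mono2)
    show "finite (Pow V)" using fV by simp
    show "B \<subseteq> Pow V" by (rule BP)
    fix R S assume "S \<in> Pow V - B"
    then show "0 \<le> (\<Sum>t \<in> {t \<in> Trees V S. R \<in> t}. z S t)"
      using z0 by (intro sum_nonneg) auto
  qed
  also have "\<dots> \<le> (\<Sum>R\<in>B. C R)"
    using zc BP by (intro sum_mono) blast
  finally show ?thesis unfolding B_def .
qed


definition den :: "'a set \<Rightarrow> ('a set \<Rightarrow> real) \<Rightarrow> 'a set \<Rightarrow> real" where
  "den V D U = (\<Sum>S \<in> boundary V U. D S)"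

lemma boundary_sub: "boundary V U \<subseteq> Pow V" unfolding boundary_def by blast

lemma mincut_props:
  assumes fV: "finite V" and D0: "\<forall>S. S \<subseteq> V \<longrightarrow> 0 \<le> D S"
    and ex: "\<exists>S. S \<subseteq> V \<and> 2 \<le> card S \<and> 0 < D S"
  shows "\<And>U. U \<subseteq> V \<Longrightarrow> den V D U \<noteq> 0 \<Longrightarrow> MinHypCut V C D \<le> (\<Sum>A \<in> boundary V U. C A) / den V D U"
    and "\<exists>U. U \<subseteq> V \<and> den V D U \<noteq> 0 \<and> MinHypCut V C D = (\<Sum>A \<in> boundary V U. C A) / den V D U"
proof -
  let ?X = "{(\<Sum>A \<in> boundary V U. C A) / (\<Sum>S \<in> boundary V U. D S) | U.
            U \<subseteq> V \<and> (\<Sum>S \<in> boundary V U. D S) \<noteq> 0}"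
  have fin: "finite ?X"
    by (rule finite_image_set) (use fV in auto)
  obtain S where S: "S \<subseteq> V" "2 \<le> card S" "0 < D S" using ex by blast
  have "card S \<noteq> 0" using S by auto
  then have "S \<noteq> {}" by auto
  then obtain x where x: "x \<in> S" by blast
  have "\<not> S \<subseteq> {x}" using S(2) card_mono[of "{x}" S] by auto
  then obtain y where y: "y \<in> S" "y \<noteq> x" by blast
  have Sb: "S \<in> boundary V {x}" unfolding boundary_def using S x y by blast
  have fB: "finite (boundary V {x})" using boundary_sub[of V "{x}"] fV finite_subset by blast
  have "D S \<le> (\<Sum>S \<in> boundary V {x}. D S)"
    by (rule member_le_sum[OF Sb _ fB]) (use D0 in \<open>auto simp: boundary_def\<close>)
  then have "(\<Sum>S \<in> boundary V {x}. D S) \<noteq> 0" using S by auto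
  then have ne: "?X \<noteq> {}" using x S by blast
  show "MinHypCut V C D \<le> (\<Sum>A \<in> boundary V U. C A) / den V D U" if "U \<subseteq> V" "den V D U \<noteq> 0" for U
    unfolding MinHypCut_def den_def by (rule Min_le[OF fin]) (use that in \<open>auto simp: den_def\<close>)
  show "\<exists>U. U \<subseteq> V \<and> den V D U \<noteq> 0 \<and> MinHypCut V C D = (\<Sum>A \<in> boundary V U. C A) / den V D U"
    using Min_in[OF fin ne] unfolding MinHypCut_def den_def by auto
qed

lemma cut_ineq:
  assumes fV: "finite V" and D0: "\<forall>S. S \<subseteq> V \<longrightarrow> 0 \<le> D S" and C0: "\<forall>S. S \<subseteq> V \<longrightarrow> 0 \<le> C S"
    and ex: "\<exists>S. S \<subseteq> V \<and> 2 \<le> card S \<and> 0 < D S"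
    and U: "U \<subseteq> V"
  shows "MinHypCut V C D * den V D U \<le> (\<Sum>A \<in> boundary V U. C A)"
proof (cases "den V D U = 0")
  case True
  have "0 \<le> (\<Sum>A \<in> boundary V U. C A)" using C0 by (intro sum_nonneg) (auto simp: boundary_def)
  then show ?thesis using True by simp
next
  case False
  have "0 \<le> den V D U" unfolding den_def using D0 by (intro sum_nonneg) (auto simp: boundary_def)
  then have pos: "0 < den V D U" using False by simp
  have "MinHypCut V C D \<le> (\<Sum>A \<in> boundary V U. C A) / den V D U"
    using mincut_props(1)[OF fV D0 ex U False] .
  then show ?thesis using pos by (simp add: pos_le_divide_eq)
qed


definition rho :: "('a \<Rightarrow> real) \<Rightarrow> 'a set \<Rightarrow> real" where
  "rho g A = Max (insert 0 {\<bar>g p - g q\<bar> | p q. p \<in> A \<and> q \<in> A})"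

lemma rho_fin: "finite A \<Longrightarrow> finite {\<bar>g p - g q\<bar> | p q. p \<in> A \<and> q \<in> A}"
  by (rule finite_image_set2) auto

lemma rho_empty: "rho g {} = 0"
  unfolding rho_def by simp

lemma rho_nonneg: "finite A \<Longrightarrow> 0 \<le> rho g A"
  unfolding rho_def using rho_fin by (intro Max_ge) auto

lemma rho_ge: "finite A \<Longrightarrow> p \<in> A \<Longrightarrow> q \<in> A \<Longrightarrow> \<bar>g p - g q\<bar> \<le> rho g A"
  unfolding rho_def using rho_fin by (intro Max_ge) auto

lemma rho_le: "finite A \<Longrightarrow> 0 \<le> K \<Longrightarrow> (\<And>p q. p \<in> A \<Longrightarrow> q \<in> A \<Longrightarrow> \<bar>g p - g q\<bar> \<le> K) \<Longrightarrow> rho g A \<le> K"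
  unfolding rho_def using rho_fin by (subst Max_le_iff) auto

lemma rho_eq:
  assumes "finite A" "A \<noteq> {}"
  shows "rho g A = Max (g ` A) - Min (g ` A)"
proof (rule antisym)
  show "rho g A \<le> Max (g ` A) - Min (g ` A)"
  proof (rule rho_le[OF assms(1)])
    show "0 \<le> Max (g ` A) - Min (g ` A)"
    proof -
      obtain x where x: "x \<in> A" using assms(2) by blast
      have "g x \<le> Max (g ` A)" using x assms(1) by (intro Max_ge) auto
      moreover have "Min (g ` A) \<le> g x" using x assms(1) by (intro Min_le) auto
      ultimately show ?thesis by simp
    qed
    fix p q assume "p \<in> A" "q \<in> A"
    then have "g p \<le> Max (g ` A)" "g q \<le> Max (g ` A)" "Min (g ` A) \<le> g p" "Min (g ` A) \<le> g q"
      using assms(1) by (simp_all add: Max_ge Min_le)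
    then show "\<bar>g p - g q\<bar> \<le> Max (g ` A) - Min (g ` A)" by (simp add: abs_le_iff)
  qed
next
  have "Max (g ` A) \<in> g ` A" "Min (g ` A) \<in> g ` A" using assms by (auto intro: Max_in Min_in)
  then obtain p q where pq: "p \<in> A" "q \<in> A" "g p = Max (g ` A)" "g q = Min (g ` A)" by (metis imageE)
  have "\<bar>g p - g q\<bar> \<le> rho g A" by (rule rho_ge[OF assms(1) pq(1,2)])
  then show "Max (g ` A) - Min (g ` A) \<le> rho g A" unfolding pq(3,4) by simp
qed


lemma rho_step:
  fixes g :: "'a \<Rightarrow> real"
  assumes fV: "finite V" and ad: "a = Min (g ` V)" and bd: "b = Min (g ` V - {a})"
    and ne: "g ` V - {a} \<noteq> {}" and AV: "A \<subseteq> V"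
  shows "rho g A = rho (\<lambda>x. max (g x) b) A + (b - a) * (if A \<in> boundary V {x\<in>V. g x = a} then 1 else 0)"
proof -
  have fin1: "finite (g ` V - {a})" using fV by simp
  have ga: "\<And>x. x \<in> V \<Longrightarrow> a \<le> g x" unfolding ad using fV by (simp add: Min_le)
  have gb: "\<And>x. x \<in> V \<Longrightarrow> g x \<noteq> a \<Longrightarrow> b \<le> g x" unfolding bd using fin1 by (simp add: Min_le)
  have "b \<in> g ` V - {a}" unfolding bd using fin1 ne by (rule Min_in)
  then obtain xb where xb: "xb \<in> V" "g xb = b" "b \<noteq> a" by blast
  have ab: "a < b" using ga[OF xb(1)] xb by simp
  define U where "U = {x\<in>V. g x = a}"
  show ?thesis
  proof (cases "A = {}")
    case True
    then show ?thesis by (simp add: rho_empty boundary_def)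
  next
    case False
    have fA: "finite A" using AV fV finite_subset by blast
    define Mx where "Mx = Max (g ` A)"
    define Mn where "Mn = Min (g ` A)"
    have "Mx \<in> g ` A" unfolding Mx_def using fA False by (intro Max_in) auto
    then obtain x1 where x1: "x1 \<in> A" "g x1 = Mx" by (metis imageE)
    have "Mn \<in> g ` A" unfolding Mn_def using fA False by (intro Min_in) auto
    then obtain x0 where x0: "x0 \<in> A" "g x0 = Mn" by (metis imageE)
    have Mxge: "\<And>x. x \<in> A \<Longrightarrow> g x \<le> Mx" unfolding Mx_def using fA by simp
    have Mnle: "\<And>x. x \<in> A \<Longrightarrow> Mn \<le> g x" unfolding Mn_def using fA by simp
    have r1: "rho g A = Mx - Mn" unfolding Mx_def Mn_def by (rule rho_eq[OF fA False])
    have img: "(\<lambda>x. max (g x) b) ` A = (\<lambda>v. max v b) ` (g ` A)" by (simp add: image_image)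
    have mono: "mono (\<lambda>v::real. max v b)" by (auto simp: mono_def max_def)
    have r2: "rho (\<lambda>x. max (g x) b) A = max Mx b - max Mn b"
      unfolding rho_eq[OF fA False] img Mx_def Mn_def
      using mono_Max_commute[OF mono, of "g ` A"] mono_Min_commute[OF mono, of "g ` A"] fA False
      by simp
    have bnd: "A \<in> boundary V U \<longleftrightarrow> Mn = a \<and> Mx \<noteq> a"
    proof
      assume "A \<in> boundary V U"
      then obtain x y where "x \<in> A" "x \<in> U" "y \<in> A" "y \<in> V" "y \<notin> U"
        unfolding boundary_def by blast
      then have "g x = a" "g y \<noteq> a" "x \<in> V" unfolding U_def by auto
      then show "Mn = a \<and> Mx \<noteq> a"
        using Mnle[OF \<open>x \<in> A\<close>] ga[OF x0(1)[THEN subsetD[OF AV]]] x0 Mxge[OF \<open>y \<in> A\<close>] ga[OF \<open>y \<in> V\<close>]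
        by auto
    next
      assume H: "Mn = a \<and> Mx \<noteq> a"
      have "x0 \<in> U" unfolding U_def using x0 H AV by auto
      moreover have "x1 \<in> V - U" unfolding U_def using x1 H AV by auto
      ultimately show "A \<in> boundary V U" unfolding boundary_def using AV x0 x1 by blast
    qed
    have Mn_cases: "Mn = a \<or> b \<le> Mn" using gb[of x0] x0 AV by auto
    have Mx_cases: "Mx = a \<or> b \<le> Mx" using gb[of x1] x1 AV by auto
    have "Mn \<le> Mx" using Mnle[OF x1(1)] x1 by simp
    have "a \<le> Mn" using ga[of x0] x0 AV by auto
    show ?thesis
      unfolding r1 r2 U_def[symmetric] using bnd Mn_cases Mx_cases \<open>Mn \<le> Mx\<close> ab \<open>a \<le> Mn\<close>
      by (auto simp: max_def)
  qed
qed


lemma rho_const: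
  assumes fV: "finite V" and c: "card (g ` V) \<le> 1" and AV: "A \<subseteq> V"
  shows "rho g A = 0"
proof (cases "A = {}")
  case True then show ?thesis by (simp add: rho_empty)
next
  case False
  have fA: "finite A" using AV fV finite_subset by blast
  have c1: "card (g ` V) \<le> Suc 0" using c by simp
  have eq0: "\<forall>x\<in>g ` V. \<forall>y\<in>g ` V. x = y"
    by (rule card_le_Suc0_iff_eq[OF finite_imageI[OF fV], THEN iffD1, OF c1])
  have eq: "\<And>x y. x \<in> g ` V \<Longrightarrow> y \<in> g ` V \<Longrightarrow> x = y" using eq0 by metis
  have "Max (g ` A) \<in> g ` A" using fA False by (intro Max_in) auto
  then have m1: "Max (g ` A) \<in> g ` V" using image_mono[OF AV] by (rule subsetD[rotated])
  have "Min (g ` A) \<in> g ` A" using fA False by (intro Min_in) auto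
  then have m2: "Min (g ` A) \<in> g ` V" using image_mono[OF AV] by (rule subsetD[rotated])
  from m1 m2 have "Max (g ` A) = Min (g ` A)" by (rule eq)
  then show ?thesis using rho_eq[OF fA False] by simp
qed

lemma rho_cut:
  fixes g :: "'a \<Rightarrow> real"
  assumes fV: "finite V" and H: "\<forall>U. U \<subseteq> V \<longrightarrow> M * den V D U \<le> (\<Sum>A\<in>boundary V U. C A)"
  shows "M * (\<Sum>S\<in>Pow V. D S * rho g S) \<le> (\<Sum>R\<in>Pow V. C R * rho g R)"
proof (induction "card (g ` V)" arbitrary: g rule: less_induct)
  case less
  show ?case
  proof (cases "card (g ` V) \<le> 1")
    case True
    have "\<And>S. S \<in> Pow V \<Longrightarrow> rho g S = 0" by (rule rho_const[OF fV True]) simp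
    then show ?thesis by simp
  next
    case False
    define a where "a = Min (g ` V)"
    define L where "L = g ` V - {a}"
    have fGV: "finite (g ` V)" using fV by simp
    have "g ` V \<noteq> {}" using False by auto
    then have aG: "a \<in> g ` V" unfolding a_def using fGV by (intro Min_in)
    have cL: "card L = card (g ` V) - 1" unfolding L_def using aG fGV by (simp add: card_Diff_singleton)
    have neL: "L \<noteq> {}"
    proof
      assume "L = {}"
      then have "card (g ` V) - 1 = 0" using cL by simp
      then show False using False by simp
    qed
    define b where "b = Min L"
    have fL: "finite L" unfolding L_def using fGV by simp
    have bL: "b \<in> L" unfolding b_def using fL neL by (rule Min_in)
    have ga: "\<And>x. x \<in> V \<Longrightarrow> a \<le> g x" unfolding a_def by (rule Min_le[OF fGV]) simp
    have gb: "\<And>x. x \<in> V \<Longrightarrow> g x \<noteq> a \<Longrightarrow> b \<le> g x" unfolding b_def by (rule Min_le[OF fL]) (simp add: L_def)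
    have "b \<in> g ` V" using bL unfolding L_def by (rule DiffD1)
    then obtain xb where xbV: "xb \<in> V" and xbe: "g xb = b" by (metis imageE)
    have ab: "a \<le> b" using ga[OF xbV] unfolding xbe .
    define g' where "g' = (\<lambda>x. max (g x) b)"
    have "g' ` V \<subseteq> L"
    proof (rule image_subsetI)
      fix x assume xV: "x \<in> V"
      show "g' x \<in> L"
      proof (cases "g x = a")
        case True
        have "g' x = b" unfolding g'_def True using ab by (simp add: max_def)
        then show ?thesis using bL by simp
      next
        case False
        have "b \<le> g x" using gb[OF xV False] .
        then have vx: "g' x = g x" unfolding g'_def max_def by simp
        have "g x \<in> g ` V - {a}" using xV False by simp
        then show ?thesis unfolding L_def vx .
      qed
    qed
    then have "card (g' ` V) \<le> card L" using fL by (rule card_mono[rotated])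
    then have lt: "card (g' ` V) < card (g ` V)" using cL False by arith
    have IH: "M * (\<Sum>S\<in>Pow V. D S * rho g' S) \<le> (\<Sum>R\<in>Pow V. C R * rho g' R)"
      using less[OF lt] .
    define U where "U = {x\<in>V. g x = a}"
    have step: "rho g S = rho g' S + (b - a) * (if S \<in> boundary V U then 1 else 0)" if S: "S \<in> Pow V" for S
    proof -
      have SV: "S \<subseteq> V" using S by simp
      show ?thesis unfolding g'_def U_def
        using rho_step[OF fV a_def b_def[unfolded L_def] neL[unfolded L_def] SV] .
    qed
    have gen: "(\<Sum>S\<in>Pow V. F S * rho g S) = (\<Sum>S\<in>Pow V. F S * rho g' S) + (b - a) * (\<Sum>S\<in>boundary V U. F S)"
      for F :: "'a set \<Rightarrow> real"
    proof -
      have "(\<Sum>S\<in>Pow V. F S * rho g S) = (\<Sum>S\<in>Pow V. F S * rho g' S + (b - a) * (if S \<in> boundary V U then F S else 0))"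
      proof (rule sum.cong[OF refl])
        fix S assume S: "S \<in> Pow V"
        show "F S * rho g S = F S * rho g' S + (b - a) * (if S \<in> boundary V U then F S else 0)"
          unfolding step[OF S] by (cases "S \<in> boundary V U") (simp_all add: distrib_left)
      qed
      also have "\<dots> = (\<Sum>S\<in>Pow V. F S * rho g' S) + (b - a) * (\<Sum>S\<in>Pow V. if S \<in> boundary V U then F S else 0)"
        by (simp only: sum.distrib sum_distrib_left)
      also have "(\<Sum>S\<in>Pow V. if S \<in> boundary V U then F S else 0) = (\<Sum>S\<in>{S\<in>Pow V. S \<in> boundary V U}. F S)"
        by (rule sum.inter_filter[symmetric]) (simp add: fV)
      also have "{S\<in>Pow V. S \<in> boundary V U} = boundary V U" using boundary_sub[of V U] by blast
      finally show ?thesis .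
    qed
    have "U \<subseteq> V" unfolding U_def by blast
    then have HU: "M * den V D U \<le> (\<Sum>A\<in>boundary V U. C A)" using H by blast
    have "M * (\<Sum>S\<in>Pow V. D S * rho g S) = M * (\<Sum>S\<in>Pow V. D S * rho g' S) + (b - a) * (M * den V D U)"
      unfolding gen[of D] den_def by (simp add: algebra_simps)
    also have "\<dots> \<le> (\<Sum>R\<in>Pow V. C R * rho g' R) + (b - a) * (\<Sum>A\<in>boundary V U. C A)"
      using IH HU ab by (intro add_mono mult_left_mono) auto
    also have "\<dots> = (\<Sum>R\<in>Pow V. C R * rho g R)" by (rule gen[of C, symmetric])
    finally show ?thesis .
  qed
qed


lemma div_props:
  assumes "is_diversity V \<delta>" and fV: "finite V"
  shows div_nonneg: "A \<subseteq> V \<Longrightarrow> 0 \<le> \<delta> A"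
    and div_small: "A \<subseteq> V \<Longrightarrow> card A \<le> 1 \<Longrightarrow> \<delta> A = 0"
    and div_tri: "A \<subseteq> V \<Longrightarrow> B \<subseteq> V \<Longrightarrow> C \<subseteq> V \<Longrightarrow> B \<noteq> {} \<Longrightarrow> \<delta> (A \<union> C) \<le> \<delta> (A \<union> B) + \<delta> (B \<union> C)"
proof -
  have fin: "\<And>A. A \<subseteq> V \<Longrightarrow> finite A" using fV by (simp add: finite_subset)
  have H1: "\<forall>A. finite A \<and> A \<subseteq> V \<longrightarrow> 0 \<le> \<delta> A"
    using assms(1) unfolding is_diversity_def by (rule conjunct1)
  have H2: "\<forall>A. finite A \<and> A \<subseteq> V \<and> card A \<le> 1 \<longrightarrow> \<delta> A = 0"
    using assms(1) unfolding is_diversity_def by (rule conjunct2[THEN conjunct1])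
  have H3: "\<forall>A B C. finite A \<and> A \<subseteq> V \<and> finite B \<and> B \<subseteq> V \<and> finite C \<and> C \<subseteq> V \<and> B \<noteq> {}
        \<longrightarrow> \<delta> (A \<union> C) \<le> \<delta> (A \<union> B) + \<delta> (B \<union> C)"
    using assms(1) unfolding is_diversity_def by (rule conjunct2[THEN conjunct2])
  show "A \<subseteq> V \<Longrightarrow> 0 \<le> \<delta> A" by (intro H1[rule_format] conjI fin)
  show "A \<subseteq> V \<Longrightarrow> card A \<le> 1 \<Longrightarrow> \<delta> A = 0" by (intro H2[rule_format] conjI fin)
  show "A \<subseteq> V \<Longrightarrow> B \<subseteq> V \<Longrightarrow> C \<subseteq> V \<Longrightarrow> B \<noteq> {} \<Longrightarrow> \<delta> (A \<union> C) \<le> \<delta> (A \<union> B) + \<delta> (B \<union> C)"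
    by (intro H3[rule_format] conjI fin)
qed

lemma div_pair2:
  assumes d: "is_diversity V \<delta>" and fV: "finite V" and AV: "A \<subseteq> V" and p: "p \<in> A" and q: "q \<in> A"
  shows "\<delta> {p, q} \<le> 2 * \<delta> A"
proof -
  have "\<delta> ({p} \<union> {q}) \<le> \<delta> ({p} \<union> A) + \<delta> (A \<union> {q})"
    by (rule div_tri[OF d fV]) (use AV p q in auto)
  moreover have "{p} \<union> A = A" "A \<union> {q} = A" "{p} \<union> {q} = {p, q}" using p q by auto
  ultimately show ?thesis by simp
qed

lemma div_tri3:
  assumes d: "is_diversity V \<delta>" and fV: "finite V" and "x \<in> V" "p \<in> V" "q \<in> V"
  shows "\<delta> {x, p} \<le> \<delta> {x, q} + \<delta> {p, q}"
proof -
  have "\<delta> ({x} \<union> {p}) \<le> \<delta> ({x} \<union> {q}) + \<delta> ({q} \<union> {p})"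
    by (rule div_tri[OF d fV]) (use assms in auto)
  moreover have "{x} \<union> {p} = {x, p}" "{x} \<union> {q} = {x, q}" "{q} \<union> {p} = {p, q}" by auto
  ultimately show ?thesis by simp
qed

lemma div_star:
  assumes d: "is_diversity V \<delta>" and fV: "finite V" and a0: "a0 \<in> V"
  shows "B \<subseteq> V \<Longrightarrow> \<delta> (insert a0 B) \<le> (\<Sum>a\<in>B. \<delta> {a0, a})"
proof (induction B rule: infinite_finite_induct)
  case (infinite B)
  then show ?case using fV by (metis finite_subset)
next
  case empty
  have "\<delta> {a0} = 0" by (rule div_small[OF d fV]) (use a0 in auto)
  then show ?case by simp
next
  case (insert c B)
  have cV: "c \<in> V" and BV: "B \<subseteq> V" using insert.prems by auto
  have "\<delta> (insert a0 B \<union> {c}) \<le> \<delta> (insert a0 B \<union> {a0}) + \<delta> ({a0} \<union> {c})"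
    by (rule div_tri[OF d fV]) (use a0 cV BV in auto)
  moreover have "insert a0 B \<union> {c} = insert a0 (insert c B)" "insert a0 B \<union> {a0} = insert a0 B"
    "{a0} \<union> {c} = {a0, c}" by auto
  ultimately have "\<delta> (insert a0 (insert c B)) \<le> \<delta> (insert a0 B) + \<delta> {a0, c}" by simp
  also have "\<dots> \<le> (\<Sum>a\<in>B. \<delta> {a0, a}) + \<delta> {a0, c}" using insert.IH[OF BV] by simp
  finally show ?case using insert.hyps by (simp add: add.commute)
qed

lemma l1_rho: "l1_div m (\<phi> ` A) = (\<Sum>i<m. rho (\<lambda>x. \<phi> x i) A)"
proof -
  have "\<And>i. {\<bar>p i - q i\<bar> | p q. p \<in> \<phi> ` A \<and> q \<in> \<phi> ` A} = {\<bar>\<phi> p i - \<phi> q i\<bar> | p q. p \<in> A \<and> q \<in> A}"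
    by auto
  then show ?thesis unfolding l1_div_def rho_def by simp
qed

lemma frechet:
  assumes d: "is_diversity V \<delta>" and fV: "finite V" and ne: "V \<noteq> {}"
  shows "\<exists>\<delta>'. l1_embeddable V \<delta>' \<and> at_distortion V \<delta> \<delta>' (real (card V) * (2 * real (card V)))"
proof -
  obtain xs where xs: "set xs = V" "distinct xs" using finite_distinct_list[OF fV] by blast
  define m where "m = length xs"
  have mV: "m = card V" unfolding m_def using xs distinct_card by metis
  have mpos: "0 < m" unfolding mV using fV ne by (simp add: card_gt_0_iff)
  define \<phi> where "\<phi> = (\<lambda>x. \<lambda>i::nat. \<delta> {xs ! i, x})"
  define \<delta>' where "\<delta>' = (\<lambda>A. l1_div m (\<phi> ` A))"
  have emb: "l1_embeddable V \<delta>'" unfolding l1_embeddable_def \<delta>'_def by blast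
  have xsV: "\<And>i. i < m \<Longrightarrow> xs ! i \<in> V" unfolding m_def using xs(1) by auto
  have d'eq: "\<delta>' A = (\<Sum>i<m. rho (\<lambda>x. \<phi> x i) A)" for A unfolding \<delta>'_def by (rule l1_rho)
  have d'nn: "0 \<le> \<delta>' A" if "A \<subseteq> V" for A
    unfolding d'eq using rho_nonneg finite_subset[OF that fV] by (metis sum_nonneg)
  have up: "\<delta>' A \<le> real (2 * m) * \<delta> A" if AV: "A \<subseteq> V" for A
  proof -
    have fA: "finite A" using AV fV by (rule finite_subset)
    have "rho (\<lambda>x. \<phi> x i) A \<le> 2 * \<delta> A" if i: "i < m" for i
    proof (rule rho_le[OF fA])
      show "0 \<le> 2 * \<delta> A" using div_nonneg[OF d fV AV] by simp
      fix p q assume pq: "p \<in> A" "q \<in> A"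
      have pV: "p \<in> V" "q \<in> V" using pq AV by auto
      have t1: "\<delta> {xs ! i, p} \<le> \<delta> {xs ! i, q} + \<delta> {p, q}"
        by (rule div_tri3[OF d fV xsV[OF i] pV])
      have t2: "\<delta> {xs ! i, q} \<le> \<delta> {xs ! i, p} + \<delta> {q, p}"
        by (rule div_tri3[OF d fV xsV[OF i] pV(2) pV(1)])
      have "{q, p} = {p, q}" by auto
      then have "\<bar>\<phi> p i - \<phi> q i\<bar> \<le> \<delta> {p, q}" unfolding \<phi>_def using t1 t2 by (simp add: abs_le_iff)
      also have "\<dots> \<le> 2 * \<delta> A" by (rule div_pair2[OF d fV AV pq])
      finally show "\<bar>\<phi> p i - \<phi> q i\<bar> \<le> 2 * \<delta> A" .
    qed
    then have "(\<Sum>i<m. rho (\<lambda>x. \<phi> x i) A) \<le> of_nat (card {..<m}) * (2 * \<delta> A)"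
      by (intro sum_bounded_above) auto
    then show ?thesis unfolding d'eq by simp
  qed
  have low: "\<delta> A \<le> real m * \<delta>' A" if AV: "A \<subseteq> V" for A
  proof (cases "A = {}")
    case True
    have "\<delta> A = 0" by (rule div_small[OF d fV]) (use True in auto)
    then show ?thesis using d'nn[OF AV] by simp
  next
    case False
    then obtain a0 where a0: "a0 \<in> A" by blast
    have a0V: "a0 \<in> V" using a0 AV by auto
    have fA: "finite A" using AV fV by (rule finite_subset)
    have "a0 \<in> set xs" using xs(1) a0V by simp
    then obtain i0 where i0: "i0 < m" "xs ! i0 = a0" unfolding m_def by (metis in_set_conv_nth)
    have pair: "\<delta> {a0, a} \<le> \<delta>' A" if a: "a \<in> A" for a
    proof -
      have aV: "a \<in> V" using a AV by auto
      have z: "\<delta> {a0, a0} = 0" by (rule div_small[OF d fV]) (use a0V in auto)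
      have nn: "0 \<le> \<delta> {a0, a}" by (rule div_nonneg[OF d fV]) (use a0V aV in auto)
      have "\<delta> {a0, a} = \<bar>\<phi> a0 i0 - \<phi> a i0\<bar>" unfolding \<phi>_def i0(2) using z nn by simp
      also have "\<dots> \<le> rho (\<lambda>x. \<phi> x i0) A" by (rule rho_ge[OF fA a0 a])
      also have "\<dots> \<le> (\<Sum>i<m. rho (\<lambda>x. \<phi> x i) A)"
        by (rule member_le_sum[where f = "\<lambda>i. rho (\<lambda>x. \<phi> x i) A"]) (use i0 fA rho_nonneg in auto)
      finally show ?thesis unfolding d'eq .
    qed
    have "\<delta> A = \<delta> (insert a0 A)" using a0 by (simp add: insert_absorb)
    also have "\<dots> \<le> (\<Sum>a\<in>A. \<delta> {a0, a})" by (rule div_star[OF d fV a0V AV])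
    also have "\<dots> \<le> of_nat (card A) * \<delta>' A" by (rule sum_bounded_above) (rule pair)
    also have "\<dots> \<le> real m * \<delta>' A"
    proof (rule mult_right_mono)
      have "card A \<le> card V" using AV fV by (rule card_mono[rotated])
      then show "real (card A) \<le> real m" unfolding mV by simp
      show "0 \<le> \<delta>' A" by (rule d'nn[OF AV])
    qed
    finally show ?thesis .
  qed
  have "at_distortion V \<delta> \<delta>' (real (card V) * (2 * real (card V)))"
    unfolding at_distortion_def
  proof (intro exI conjI allI impI)
    show "0 < real (card V)" "0 < 2 * real (card V)" using mpos mV by auto
    show "real (card V) * (2 * real (card V)) = real (card V) * (2 * real (card V))" ..
    fix A assume AV: "A \<subseteq> V"
    show "\<delta> A / real (card V) \<le> \<delta>' A"
      using low[OF AV] mpos mV by (simp add: divide_le_eq mult.commute)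
    show "\<delta>' A \<le> 2 * real (card V) * \<delta> A"
      using up[OF AV] mV by simp
  qed
  then show ?thesis using emb by blast
qed


lemma sum_if_sub: "finite A \<Longrightarrow> t \<subseteq> A \<Longrightarrow> (\<Sum>R\<in>A. if R \<in> t then f R else 0) = (\<Sum>R\<in>t. f R)"
proof -
  assume fA: "finite A" and tA: "t \<subseteq> A"
  have "(\<Sum>R\<in>A. if R \<in> t then f R else 0) = (\<Sum>R\<in>{R\<in>A. R \<in> t}. f R)"
    by (rule sum.inter_filter[OF fA, symmetric])
  also have "{R\<in>A. R \<in> t} = t" using tA by blast
  finally show ?thesis .
qed

lemma times_ind: "(x::real) * (if P then 1 else 0) = (if P then x else 0)"
  by simp

lemma dual_exists:
  fixes V :: "'a set" and C D :: "'a set \<Rightarrow> real"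
  assumes fV: "finite V" and nf: "\<not> hsp_feasible V C D g"
  shows "\<exists>w u. (\<forall>R\<in>Pow V. 0 \<le> w R) \<and> (\<forall>S\<in>Pow V. \<forall>t\<in>Trees V S. u S \<le> (\<Sum>R\<in>t. w R))
           \<and> (\<Sum>R\<in>Pow V. w R * C R) < g * (\<Sum>S\<in>Pow V. u S * D S)"
proof -
  define I where "I = Pow V <+> Pow V"
  define J where "J = (SIGMA S:Pow V. Trees V S) <+> Pow V"
  define a :: "('a set \<times> 'a set set) + 'a set \<Rightarrow> 'a set + 'a set \<Rightarrow> real" where
    "a = (\<lambda>j. case j of Inl st \<Rightarrow> (\<lambda>i. case i of Inl R \<Rightarrow> (if R \<in> snd st then 1 else 0)
                                               | Inr S' \<Rightarrow> (if S' = fst st then 1 else 0))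
                      | Inr R \<Rightarrow> (\<lambda>i. case i of Inl R' \<Rightarrow> (if R' = R then 1 else 0) | Inr S' \<Rightarrow> 0))"
  define b :: "'a set + 'a set \<Rightarrow> real" where "b = (\<lambda>i. case i of Inl R \<Rightarrow> C R | Inr S \<Rightarrow> g * D S)"
  have fP: "finite (Pow V)" using fV by simp
  have fT: "\<And>S. finite (Trees V S)" by (rule trees_fin[OF fV])
  have fSig: "finite (SIGMA S:Pow V. Trees V S)" using fP fT by (intro finite_SigmaI) auto
  have fI: "finite I" unfolding I_def using fP by simp
  have fJ: "finite J" unfolding J_def using fSig fP by simp
  have ipI: "ip I y v = (\<Sum>R\<in>Pow V. y (Inl R) * v (Inl R)) + (\<Sum>S\<in>Pow V. y (Inr S) * v (Inr S))" for y v
    unfolding ip_def I_def by (simp add: sum.Plus[OF fP fP] comp_def)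
  have sumJ: "(\<Sum>j\<in>J. h j) = (\<Sum>S\<in>Pow V. \<Sum>t\<in>Trees V S. h (Inl (S, t))) + (\<Sum>R\<in>Pow V. h (Inr R))" for h :: "_ \<Rightarrow> real"
  proof -
    have "(\<Sum>j\<in>J. h j) = (\<Sum>st\<in>(SIGMA S:Pow V. Trees V S). h (Inl st)) + (\<Sum>R\<in>Pow V. h (Inr R))"
      unfolding J_def by (simp add: sum.Plus[OF fSig fP] comp_def)
    also have "(\<Sum>st\<in>(SIGMA S:Pow V. Trees V S). h (Inl st)) = (\<Sum>S\<in>Pow V. \<Sum>t\<in>Trees V S. h (Inl (S, t)))"
    proof -
      have "(\<Sum>S\<in>Pow V. \<Sum>t\<in>Trees V S. h (Inl (S, t))) = (\<Sum>st\<in>(SIGMA S:Pow V. Trees V S). (\<lambda>S t. h (Inl (S, t))) (fst st) (snd st))"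
        using sum.Sigma[where g = "\<lambda>S t. h (Inl (S, t))" and A = "Pow V" and B = "Trees V"] fP fT
        by (simp add: case_prod_beta)
      then show ?thesis by simp
    qed
    finally show ?thesis .
  qed
  show ?thesis
  proof (cases "\<forall>y. (\<forall>j\<in>J. 0 \<le> ip I y (a j)) \<longrightarrow> 0 \<le> ip I y b")
    case True
    obtain l where l0: "\<forall>j\<in>J. 0 \<le> l j" and lb: "\<forall>i\<in>I. b i = (\<Sum>j\<in>J. l j * a j i)"
      using farkas_aux[OF fJ fI True] by blast
    define z where "z = (\<lambda>S t. l (Inl (S, t)))"
    have "hsp_feasible V C D g"
      unfolding hsp_feasible_def
    proof (intro exI[of _ z] conjI ballI)
      fix S t assume "S \<in> Pow V" "t \<in> Trees V S"
      then have "Inl (S, t) \<in> J" unfolding J_def by (intro InlI SigmaI) auto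
      then show "0 \<le> z S t" unfolding z_def using l0 by blast
    next
      fix R assume R: "R \<in> Pow V"
      have "Inl R \<in> I" unfolding I_def using R by (intro InlI)
      from lb[rule_format, OF this] have "C R = (\<Sum>j\<in>J. l j * a j (Inl R))" unfolding b_def by simp
      also have "\<dots> = (\<Sum>S\<in>Pow V. \<Sum>t\<in>Trees V S. if R \<in> t then z S t else 0) + l (Inr R)"
        unfolding sumJ a_def z_def using R fP by (simp add: times_ind)
      also have "(\<Sum>S\<in>Pow V. \<Sum>t\<in>Trees V S. if R \<in> t then z S t else 0) = (\<Sum>S\<in>Pow V. \<Sum>t\<in>{t\<in>Trees V S. R \<in> t}. z S t)"
        by (simp only: sum.inter_filter[OF fT])
      finally have "C R = (\<Sum>S\<in>Pow V. \<Sum>t\<in>{t\<in>Trees V S. R \<in> t}. z S t) + l (Inr R)" .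
      moreover have "Inr R \<in> J" unfolding J_def using R by (intro InrI)
      then have "0 \<le> l (Inr R)" using l0 by blast
      ultimately show "(\<Sum>S\<in>Pow V. \<Sum>t\<in>{t\<in>Trees V S. R \<in> t}. z S t) \<le> C R" by simp
    next
      fix S assume S: "S \<in> Pow V"
      have "Inr S \<in> I" unfolding I_def using S by (intro InrI)
      from lb[rule_format, OF this] have "g * D S = (\<Sum>j\<in>J. l j * a j (Inr S))" unfolding b_def by simp
      also have "\<dots> = (\<Sum>S'\<in>Pow V. if S' = S then (\<Sum>t\<in>Trees V S'. z S' t) else 0)"
        unfolding sumJ a_def z_def
        apply (simp add: times_ind)
        apply (rule sum.cong[OF refl])
        subgoal for S' by (cases "S' = S") auto
        done
      also have "\<dots> = (\<Sum>t\<in>Trees V S. z S t)" using S fP by simp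
      finally show "(\<Sum>t\<in>Trees V S. z S t) = g * D S" by simp
    qed
    with nf have False by (rule notE)
    then show ?thesis by (rule FalseE)
  next
    case False
    have "\<exists>y. (\<forall>j\<in>J. 0 \<le> ip I y (a j)) \<and> ip I y b < 0" using False by (meson not_le)
    then obtain y where y1: "\<forall>j\<in>J. 0 \<le> ip I y (a j)" and y2: "ip I y b < 0" by (elim exE conjE)
    define w where "w = (\<lambda>R. y (Inl R))"
    define u where "u = (\<lambda>S. - y (Inr S))"
    show ?thesis
    proof (rule exI[of _ w], rule exI[of _ u], intro conjI)
      show "\<forall>R\<in>Pow V. 0 \<le> w R"
      proof
      fix R assume R: "R \<in> Pow V"
      have "Inr R \<in> J" unfolding J_def using R by (intro InrI)
      then have "0 \<le> ip I y (a (Inr R))" using y1 by blast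
      also have "ip I y (a (Inr R)) = w R" unfolding ipI a_def w_def using R fP by (simp add: times_ind)
      finally show "0 \<le> w R" .
      qed
    next
      show "\<forall>S\<in>Pow V. \<forall>t\<in>Trees V S. u S \<le> (\<Sum>R\<in>t. w R)"
      proof (intro ballI)
      fix S t assume S: "S \<in> Pow V" and t: "t \<in> Trees V S"
      have "Inl (S, t) \<in> J" unfolding J_def using S t by (intro InlI SigmaI) auto
      then have "0 \<le> ip I y (a (Inl (S, t)))" using y1 by blast
      also have "ip I y (a (Inl (S, t))) = (\<Sum>R\<in>Pow V. if R \<in> t then w R else 0) - u S"
        unfolding ipI a_def w_def u_def using S fP by (simp add: times_ind)
      also have "(\<Sum>R\<in>Pow V. if R \<in> t then w R else 0) = (\<Sum>R\<in>t. w R)"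
        by (rule sum_if_sub[OF fP trees_sub[OF t]])
      finally show "u S \<le> (\<Sum>R\<in>t. w R)" by simp
      qed
    next
      have "ip I y b = (\<Sum>R\<in>Pow V. w R * C R) - g * (\<Sum>S\<in>Pow V. u S * D S)"
        unfolding ipI b_def w_def u_def by (simp add: sum_distrib_left sum_negf algebra_simps)
      then show "(\<Sum>R\<in>Pow V. w R * C R) < g * (\<Sum>S\<in>Pow V. u S * D S)" using y2 by simp
    qed
  qed
qed


lemma k1_facts:
  assumes d: "is_diversity V \<delta>" and fV: "finite V" and ne: "V \<noteq> {}"
  shows "{c. \<exists>\<delta>'. l1_embeddable V \<delta>' \<and> at_distortion V \<delta> \<delta>' c} \<noteq> {}"
    and "k1_div V \<delta> \<le> real (card V) * (2 * real (card V))"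
    and "0 \<le> k1_div V \<delta>"
proof -
  let ?X = "{c. \<exists>\<delta>'. l1_embeddable V \<delta>' \<and> at_distortion V \<delta> \<delta>' c}"
  have mem: "real (card V) * (2 * real (card V)) \<in> ?X" using frechet[OF d fV ne] by simp
  then show "?X \<noteq> {}" by (metis empty_iff)
  have pos: "\<And>c. c \<in> ?X \<Longrightarrow> 0 \<le> c"
  proof -
    fix c assume "c \<in> ?X"
    then obtain \<delta>' where "at_distortion V \<delta> \<delta>' c" by blast
    then obtain c1 c2 where "0 < c1" "0 < c2" "c = c1 * c2" unfolding at_distortion_def by blast
    then show "0 \<le> c" by simp
  qed
  have bdd: "bdd_below ?X" unfolding bdd_below_def using pos by blast
  show "k1_div V \<delta> \<le> real (card V) * (2 * real (card V))"
    unfolding k1_div_def by (rule cInf_lower[OF mem bdd])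
  show "0 \<le> k1_div V \<delta>"
    unfolding k1_div_def using mem by (intro cInf_greatest pos) auto
qed

lemma l1_cut:
  fixes \<phi> :: "'a \<Rightarrow> nat \<Rightarrow> real"
  assumes fV: "finite V" and H: "\<forall>U. U \<subseteq> V \<longrightarrow> M * den V D U \<le> (\<Sum>A\<in>boundary V U. C A)"
    and emb: "\<forall>A. A \<subseteq> V \<longrightarrow> \<delta>' A = l1_div m (\<phi> ` A)"
  shows "M * (\<Sum>S\<in>Pow V. D S * \<delta>' S) \<le> (\<Sum>R\<in>Pow V. C R * \<delta>' R)"
proof -
  have eq: "(\<Sum>S\<in>Pow V. F S * \<delta>' S) = (\<Sum>i<m. \<Sum>S\<in>Pow V. F S * rho (\<lambda>x. \<phi> x i) S)" for F
  proof -
    have "(\<Sum>S\<in>Pow V. F S * \<delta>' S) = (\<Sum>S\<in>Pow V. \<Sum>i<m. F S * rho (\<lambda>x. \<phi> x i) S)"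
    proof (rule sum.cong[OF refl])
      fix S assume "S \<in> Pow V"
      then have "\<delta>' S = l1_div m (\<phi> ` S)" using emb by simp
      then show "F S * \<delta>' S = (\<Sum>i<m. F S * rho (\<lambda>x. \<phi> x i) S)"
        unfolding l1_rho by (simp add: sum_distrib_left)
    qed
    also have "\<dots> = (\<Sum>i<m. \<Sum>S\<in>Pow V. F S * rho (\<lambda>x. \<phi> x i) S)" by (rule sum.swap)
    finally show ?thesis .
  qed
  have "M * (\<Sum>S\<in>Pow V. D S * \<delta>' S) = (\<Sum>i<m. M * (\<Sum>S\<in>Pow V. D S * rho (\<lambda>x. \<phi> x i) S))"
    unfolding eq by (simp add: sum_distrib_left)
  also have "\<dots> \<le> (\<Sum>i<m. \<Sum>R\<in>Pow V. C R * rho (\<lambda>x. \<phi> x i) R)"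
    by (rule sum_mono) (rule rho_cut[OF fV H])
  also have "\<dots> = (\<Sum>R\<in>Pow V. C R * \<delta>' R)" unfolding eq ..
  finally show ?thesis .
qed


theorem theorem18:
  fixes V :: "'a set" and E :: "'a set set"
    and C D :: "'a set \<Rightarrow> real"
  assumes "finite V"
    and "E \<subseteq> Pow V"
    and "conn_contains V E"
    and "\<forall>R. R \<subseteq> V \<longrightarrow> 0 \<le> C R"
    and "\<forall>R. R \<subseteq> V \<longrightarrow> R \<notin> E \<longrightarrow> C R = 0"
    and "\<forall>S. S \<subseteq> V \<longrightarrow> 0 \<le> D S"
    and "\<exists>S. S \<subseteq> V \<and> 2 \<le> card S \<and> 0 < D S"
  shows "MaxHSP V C D \<le> MinHypCut V C D \<and> MinHypCut V C D \<le> k1_hyp V E * MaxHSP V C D"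
proof -
  note fV = assms(1) and EV = assms(2) and cV = assms(3) and C0 = assms(4) and Cz = assms(5)
    and D0 = assms(6) and ex = assms(7)
  have Vne: "V \<noteq> {}"
  proof
    assume "V = {}"
    then show False using ex by (metis card.empty not_numeral_le_zero subset_empty)
  qed
  have fP: "finite (Pow V)" using fV by simp
  have fE: "finite E" using EV fP by (rule finite_subset)
  define M where "M = MinHypCut V C D"
  define F where "F = {f. hsp_feasible V C D f}"
  have feas0: "hsp_feasible V C D 0"
    unfolding hsp_feasible_def
  proof (rule exI[of _ "\<lambda>S t. 0"], intro conjI ballI)
    fix R assume "R \<in> Pow V"
    then show "(\<Sum>S\<in>Pow V. \<Sum>t\<in>{t \<in> Trees V S. R \<in> t}. (0::real)) \<le> C R" using C0 by simp
  qed simp_all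
  have fle: "f \<le> M" if f: "hsp_feasible V C D f" for f
  proof -
    obtain U where U: "U \<subseteq> V" "den V D U \<noteq> 0" "M = (\<Sum>A \<in> boundary V U. C A) / den V D U"
      using mincut_props(2)[OF fV D0 ex] unfolding M_def by blast
    have "0 \<le> den V D U" unfolding den_def using D0 boundary_sub[of V U] by (intro sum_nonneg) auto
    then have dpos: "0 < den V D U" using U(2) by simp
    have "f * den V D U \<le> (\<Sum>A \<in> boundary V U. C A)" unfolding den_def by (rule flow_le_cut[OF fV f])
    then show ?thesis unfolding U(3) using dpos by (simp add: pos_le_divide_eq)
  qed
  have bdd: "bdd_above F" unfolding bdd_above_def F_def using fle by blast
  have F0: "0 \<in> F" unfolding F_def using feas0 by simp
  have neF: "F \<noteq> {}" using F0 by (metis empty_iff)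
  have part1: "MaxHSP V C D \<le> M"
    unfolding MaxHSP_def F_def[symmetric] by (rule cSup_least[OF neF]) (simp add: F_def fle)
  define fs where "fs = MaxHSP V C D"
  have fs0: "0 \<le> fs" unfolding fs_def MaxHSP_def F_def[symmetric] by (rule cSup_upper[OF F0 bdd])
  have Hcut: "\<forall>U. U \<subseteq> V \<longrightarrow> M * den V D U \<le> (\<Sum>A\<in>boundary V U. C A)"
    unfolding M_def using cut_ineq[OF fV D0 C0 ex] by blast
  define B where "B = real (card V) * (2 * real (card V))"
  define Ks where "Ks = {k1_div V \<delta> | \<delta>. supported_on V E \<delta>}"
  have Kle: "\<And>k. k \<in> Ks \<Longrightarrow> k \<le> B"
  proof -
    fix k assume "k \<in> Ks"
    then obtain \<delta> where "k = k1_div V \<delta>" "supported_on V E \<delta>" unfolding Ks_def by blast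
    then show "k \<le> B" unfolding B_def supported_on_def using k1_facts(2)[OF _ fV Vne] by blast
  qed
  have bddK: "bdd_above Ks" unfolding bdd_above_def using Kle by blast
  have supp: "supported_on V E (steiner E w)" if w: "\<forall>R\<in>Pow V. 0 \<le> w R" for w
    unfolding supported_on_def
  proof (intro conjI exI[of _ w] allI impI)
    have "\<forall>e\<in>E. 0 \<le> w e" using w EV by blast
    then show "is_diversity V (steiner E w)" by (rule steiner_diversity[OF fV EV cV])
    show "\<forall>e\<in>E. 0 \<le> w e" using w EV by blast
  qed simp
  have kK: "k1_div V (steiner E w) \<le> k1_hyp V E" if w: "\<forall>R\<in>Pow V. 0 \<le> w R" for w
  proof -
    have "k1_div V (steiner E w) \<in> Ks" unfolding Ks_def using supp[OF w] by blast
    then show ?thesis unfolding k1_hyp_def Ks_def[symmetric] by (rule cSup_upper[OF _ bddK])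
  qed
  have K0: "0 \<le> k1_hyp V E"
  proof -
    have w1: "\<forall>R\<in>Pow V. 0 \<le> (\<lambda>R. 1::real) R" by simp
    have "is_diversity V (steiner E (\<lambda>R. 1))" using supp[OF w1] unfolding supported_on_def by blast
    then have "0 \<le> k1_div V (steiner E (\<lambda>R. 1))" by (rule k1_facts(3)[OF _ fV Vne])
    also have "\<dots> \<le> k1_hyp V E" by (rule kK[OF w1])
    finally show ?thesis .
  qed
  have main: "M \<le> k1_hyp V E * g" if g: "fs < g" for g
  proof -
    have gpos: "0 < g" using fs0 g by simp
    have nf: "\<not> hsp_feasible V C D g"
    proof
      assume "hsp_feasible V C D g"
      then have "g \<in> F" unfolding F_def by simp
      then have "g \<le> fs" unfolding fs_def MaxHSP_def F_def[symmetric] by (rule cSup_upper[OF _ bdd])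
      then show False using g by simp
    qed
    obtain w u where w0: "\<forall>R\<in>Pow V. 0 \<le> w R"
      and uw: "\<forall>S\<in>Pow V. \<forall>t\<in>Trees V S. u S \<le> (\<Sum>R\<in>t. w R)"
      and wu: "(\<Sum>R\<in>Pow V. w R * C R) < g * (\<Sum>S\<in>Pow V. u S * D S)"
      using dual_exists[OF fV nf] by blast
    define \<delta> where "\<delta> = steiner E w"
    have div: "is_diversity V \<delta>" using supp[OF w0] unfolding supported_on_def \<delta>_def by blast
    have u_le: "u S \<le> \<delta> S" if S: "S \<in> Pow V" for S
    proof -
      have SV: "S \<subseteq> V" using S by simp
      obtain E' where E': "E' \<subseteq> E" "conn_contains S E'" "\<delta> S = (\<Sum>e\<in>E'. w e)"
        using steiner_props(1)[OF fE conn_sub[OF cV SV]] unfolding \<delta>_def by blast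
      have fE': "finite E'" using E'(1) fE by (rule finite_subset)
      have E'P: "E' \<subseteq> Pow V" using E'(1) EV by (rule subset_trans)
      obtain t where t: "t \<in> Trees V S" "t \<subseteq> E'" using exists_tree[OF fE' E'P E'(2)] by blast
      have "u S \<le> (\<Sum>R\<in>t. w R)" using uw S t(1) by blast
      also have "\<dots> \<le> (\<Sum>e\<in>E'. w e)"
        by (rule sum_mono2[OF fE' t(2)]) (use w0 E'P in blast)
      finally show ?thesis using E'(3) by simp
    qed
    have dw: "C R * \<delta> R \<le> w R * C R" if R: "R \<in> Pow V" for R
    proof (cases "R \<in> E")
      case True
      have "\<delta> R \<le> (\<Sum>e\<in>{R}. w e)" unfolding \<delta>_def
        by (rule steiner_props(2)[OF fE conn_sub[OF cV]]) (use R True conn_single in auto)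
      then have "\<delta> R \<le> w R" by simp
      moreover have "0 \<le> C R" using C0 R by simp
      ultimately show ?thesis by (simp add: mult.commute mult_left_mono)
    next
      case False
      then have "C R = 0" using Cz R by simp
      then show ?thesis by simp
    qed
    have dnn: "0 \<le> \<delta> S" if "S \<in> Pow V" for S using div_nonneg[OF div fV] that by simp
    define SC where "SC = (\<Sum>R\<in>Pow V. C R * \<delta> R)"
    define SD where "SD = (\<Sum>S\<in>Pow V. D S * \<delta> S)"
    have SC0: "0 \<le> SC" unfolding SC_def using C0 dnn by (intro sum_nonneg mult_nonneg_nonneg) auto
    have "SC \<le> (\<Sum>R\<in>Pow V. w R * C R)" unfolding SC_def by (rule sum_mono) (rule dw)
    also have "\<dots> < g * (\<Sum>S\<in>Pow V. u S * D S)" by (rule wu)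
    also have "\<dots> \<le> g * SD"
    proof (rule mult_left_mono)
      show "0 \<le> g" using gpos by simp
      show "(\<Sum>S\<in>Pow V. u S * D S) \<le> SD" unfolding SD_def
      proof (rule sum_mono)
        fix S assume S: "S \<in> Pow V"
        have "0 \<le> D S" using D0 S by simp
        then show "u S * D S \<le> D S * \<delta> S" using u_le[OF S] by (simp add: mult.commute mult_left_mono)
      qed
    qed
    finally have SCD: "SC < g * SD" .
    have SDpos: "0 < SD"
    proof (rule ccontr)
      assume "\<not> 0 < SD"
      then have "g * SD \<le> 0" using gpos by (simp add: mult_nonneg_nonpos)
      then show False using SC0 SCD by simp
    qed
    let ?X = "{c. \<exists>\<delta>'. l1_embeddable V \<delta>' \<and> at_distortion V \<delta> \<delta>' c}"
    have "M / g \<le> k1_div V \<delta>"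
      unfolding k1_div_def
    proof (rule cInf_greatest[OF k1_facts(1)[OF div fV Vne]])
      fix c assume "c \<in> ?X"
      then obtain \<delta>' where emb: "l1_embeddable V \<delta>'" and dist: "at_distortion V \<delta> \<delta>' c" by blast
      obtain m and \<phi> :: "'a \<Rightarrow> nat \<Rightarrow> real" where emb': "\<forall>A. A \<subseteq> V \<longrightarrow> \<delta>' A = l1_div m (\<phi> ` A)"
        using emb unfolding l1_embeddable_def by blast
      obtain c1 c2 where c12: "0 < c1" "0 < c2" "c = c1 * c2"
        and lo: "\<forall>A. A \<subseteq> V \<longrightarrow> \<delta> A / c1 \<le> \<delta>' A" and hi: "\<forall>A. A \<subseteq> V \<longrightarrow> \<delta>' A \<le> c2 * \<delta> A"
        using dist unfolding at_distortion_def by blast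
      define X where "X = (\<Sum>S\<in>Pow V. D S * \<delta>' S)"
      define Y where "Y = (\<Sum>R\<in>Pow V. C R * \<delta>' R)"
      have MXY: "M * X \<le> Y" unfolding X_def Y_def by (rule l1_cut[OF fV Hcut emb'])
      have Yle: "Y \<le> c2 * SC" unfolding Y_def SC_def sum_distrib_left
      proof (rule sum_mono)
        fix R assume R: "R \<in> Pow V"
        have "\<delta>' R \<le> c2 * \<delta> R" using hi R by simp
        moreover have "0 \<le> C R" using C0 R by simp
        ultimately have "C R * \<delta>' R \<le> C R * (c2 * \<delta> R)" by (rule mult_left_mono)
        then show "C R * \<delta>' R \<le> c2 * (C R * \<delta> R)" by (simp add: algebra_simps)
      qed
      have SDle: "SD \<le> c1 * X" unfolding X_def SD_def sum_distrib_left
      proof (rule sum_mono)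
        fix S assume S: "S \<in> Pow V"
        have "\<delta> S / c1 \<le> \<delta>' S" using lo S by simp
        then have "\<delta> S \<le> c1 * \<delta>' S" using c12(1) by (simp add: divide_le_eq mult.commute)
        moreover have "0 \<le> D S" using D0 S by simp
        ultimately have "D S * \<delta> S \<le> D S * (c1 * \<delta>' S)" by (rule mult_left_mono)
        then show "D S * \<delta> S \<le> c1 * (D S * \<delta>' S)" by (simp add: algebra_simps)
      qed
      have Xpos: "0 < X"
      proof (rule ccontr)
        assume "\<not> 0 < X"
        then have "c1 * X \<le> 0" using c12(1) by (simp add: mult_nonneg_nonpos)
        then show False using SDle SDpos by simp
      qed
      have "M * X \<le> c2 * SC" using MXY Yle by simp
      also have "\<dots> \<le> c2 * (g * SD)" using SCD c12(2) by simp
      also have "\<dots> \<le> c2 * (g * (c1 * X))"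
        using SDle c12(2) gpos by (simp add: mult_left_mono)
      finally have "M * X \<le> (c * g) * X" unfolding c12(3) by (simp add: algebra_simps)
      then have "M \<le> c * g" using Xpos by simp
      then show "M / g \<le> c" using gpos by (simp add: divide_le_eq)
    qed
    then have "M \<le> k1_div V \<delta> * g" using gpos by (simp add: divide_le_eq)
    also have "\<dots> \<le> k1_hyp V E * g"
      using kK[OF w0] gpos unfolding \<delta>_def by (simp add: mult_right_mono)
    finally show ?thesis .
  qed
  have part2: "M \<le> k1_hyp V E * fs"
  proof (rule field_le_epsilon)
    fix e :: real assume e: "0 < e"
    define g where "g = fs + e / (k1_hyp V E + 1)"
    have "0 < e / (k1_hyp V E + 1)" using e K0 by simp
    then have "fs < g" unfolding g_def by simp
    then have "M \<le> k1_hyp V E * g" by (rule main)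
    also have "\<dots> = k1_hyp V E * fs + k1_hyp V E * e / (k1_hyp V E + 1)"
      unfolding g_def by (simp add: algebra_simps)
    also have "k1_hyp V E * e / (k1_hyp V E + 1) \<le> e"
      using K0 e by (simp add: divide_le_eq)
    finally show "M \<le> k1_hyp V E * fs + e" by simp
  qed
  show ?thesis using part1 part2 unfolding M_def fs_def by simp
qed


end
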